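(* Let $g,h$ be complex-valued functions on the positive integers such that $g(n),h(n)=O(e^{cn})$ for some $c\ge0$. Define finite differences by $\Delta^0h(j)=h(j)$ and $\Delta^mh(j)=\Delta^{m-1}h(j+1)-\Delta^{m-1}h(j)$ for $m\ge1$, and let $G(z)=\sum_{n=1}^\infty g(n)z^{n-1}$. Then there is a disc centred at $z=0$ on which $$\sum_{n=1}^\infty g(n)h(n)z^{n-1}=\sum_{m=0}^\infty G^{(m)}(z)\,\Delta^mh(1)\,\frac{z^m}{m!}.$$ Similarly, if $g,h$ are complex-valued functions on the non-negative integers with $g(n),h(n)=O(e^{cn})$ and $\tilde G(z)=\sum_{n=0}^\infty g(n)z^n$, then on some disc centred at $0$, $$\sum_{n=0}^\infty g(n)h(n)z^n=\sum_{m=0}^\infty\tilde G^{(m)}(z)\,\Delta^mh(0)\,\frac{z^m}{m!}.$$ *)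

theory Defs
  imports "HOL-Analysis.Analysis" "HOL-Library.Landau_Symbols"
begin

fun fwd_diff :: "nat \<Rightarrow> (nat \<Rightarrow> complex) \<Rightarrow> nat \<Rightarrow> complex" where
  "fwd_diff 0 h j = h j"
| "fwd_diff (Suc m) h j = fwd_diff m h (Suc j) - fwd_diff m h j"

end

theory Submission
  imports Defs
begin

lemma bigO_bound:
  fixes f :: "nat \<Rightarrow> complex" and c :: real
  assumes c0: "c \<ge> 0" and "(\<lambda>n. norm (f n)) \<in> O(\<lambda>n. exp (c * real n))"
  shows "\<exists>K. K \<ge> 0 \<and> (\<forall>n. norm (f n) \<le> K * exp c ^ n)"
proof -
  obtain C where C: "C > 0" "eventually (\<lambda>n. norm (norm (f n)) \<le> C * norm (exp (c * real n))) at_top"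
    using landau_o.bigE[OF assms(2)] by blast
  then obtain N where N: "\<And>n. n \<ge> N \<Longrightarrow> norm (f n) \<le> C * exp c ^ n"
    by (auto simp: eventually_at_top_linorder exp_of_nat_mult[symmetric] mult.commute)
  define K where "K = C + (\<Sum>i<N. norm (f i))"
  have K0: "K \<ge> 0" using C by (simp add: K_def sum_nonneg)
  have "norm (f n) \<le> K * exp c ^ n" for n
  proof (cases "n \<ge> N")
    case True
    have "C * exp c ^ n \<le> K * exp c ^ n"
      by (intro mult_right_mono) (auto simp: K_def sum_nonneg)
    then show ?thesis using N[OF True] by linarith
  next
    case False
    have "norm (f n) \<le> (\<Sum>i<N. norm (f i))"
      using False by (intro member_le_sum) auto
    also have "\<dots> \<le> K" using C by (simp add: K_def)
    also have "K \<le> K * exp c ^ n"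
    proof -
      have "exp c ^ n \<ge> 1" using c0 by (intro one_le_power) simp
      then show ?thesis using K0 by (simp add: mult_le_cancel_left1)
    qed
    finally show ?thesis .
  qed
  with K0 show ?thesis by blast
qed

lemma fwd_diff_bound:
  fixes h :: "nat \<Rightarrow> complex"
  assumes K: "K \<ge> 0" and R: "R \<ge> 1" and hb: "\<And>n. norm (h n) \<le> K * R ^ n"
  shows "norm (fwd_diff m h j) \<le> K * R ^ j * (2 * R) ^ m"
proof (induction m arbitrary: j)
  case 0
  then show ?case using hb by simp
next
  case (Suc m)
  have "norm (fwd_diff (Suc m) h j) \<le> norm (fwd_diff m h (Suc j)) + norm (fwd_diff m h j)"
    by (simp add: norm_triangle_ineq4)
  also have "\<dots> \<le> K * R ^ Suc j * (2 * R) ^ m + K * R ^ j * (2 * R) ^ m"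
    using Suc.IH[of "Suc j"] Suc.IH[of j] by linarith
  also have "\<dots> = (K * R ^ j * (2 * R) ^ m) * (R + 1)" by (simp add: algebra_simps)
  also have "\<dots> \<le> (K * R ^ j * (2 * R) ^ m) * (2 * R)"
    using R K by (intro mult_left_mono) auto
  also have "\<dots> = K * R ^ j * (2 * R) ^ Suc m" by (simp add: algebra_simps)
  finally show ?case .
qed

lemma pascal_sum:
  fixes a :: "nat \<Rightarrow> complex"
  shows "(\<Sum>m\<le>Suc n. of_nat (Suc n choose m) * a m) =
         (\<Sum>m\<le>n. of_nat (n choose m) * (a (Suc m) + a m))"
proof -
  have "(\<Sum>m\<le>Suc n. of_nat (Suc n choose m) * a m) =
        a 0 + (\<Sum>m\<le>n. of_nat (Suc n choose Suc m) * a (Suc m))"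
    by (subst sum.atMost_Suc_shift) simp
  also have "\<dots> = (\<Sum>m\<le>n. of_nat (n choose m) * a (Suc m)) +
        (a 0 + (\<Sum>m\<le>n. of_nat (n choose Suc m) * a (Suc m)))"
    by (simp add: sum.distrib distrib_right)
  also have "a 0 + (\<Sum>m\<le>n. of_nat (n choose Suc m) * a (Suc m)) =
        (\<Sum>m\<le>Suc n. of_nat (n choose m) * a m)"
    by (subst sum.atMost_Suc_shift) simp
  also have "\<dots> = (\<Sum>m\<le>n. of_nat (n choose m) * a m)"
    by simp
  finally show ?thesis by (simp add: sum.distrib distrib_left)
qed

lemma newton_forward:
  fixes h :: "nat \<Rightarrow> complex"
  shows "h (j + n) = (\<Sum>m\<le>n. of_nat (n choose m) * fwd_diff m h j)"
proof (induction n arbitrary: j)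
  case 0
  then show ?case by simp
next
  case (Suc n)
  have "h (j + Suc n) = h (Suc j + n)" by simp
  also have "\<dots> = (\<Sum>m\<le>n. of_nat (n choose m) * fwd_diff m h (Suc j))" by (rule Suc.IH)
  also have "\<dots> = (\<Sum>m\<le>n. of_nat (n choose m) * (fwd_diff (Suc m) h j + fwd_diff m h j))"
    by simp
  also have "\<dots> = (\<Sum>m\<le>Suc n. of_nat (Suc n choose m) * fwd_diff m h j)"
    by (rule pascal_sum[symmetric])
  finally show ?case .
qed

lemma fps_deriv_funpow_nth:
  fixes F :: "complex fps"
  shows "fps_nth ((fps_deriv ^^ m) F) n = fps_nth F (n + m) * pochhammer (of_nat (n + 1)) m"
proof (induction m arbitrary: n)
  case 0
  then show ?case by simp
next
  case (Suc m)
  have "fps_nth ((fps_deriv ^^ Suc m) F) n = of_nat (n + 1) * fps_nth ((fps_deriv ^^ m) F) (Suc n)"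
    by (simp add: fps_deriv_def)
  also have "\<dots> = of_nat (n + 1) * (fps_nth F (Suc n + m) * pochhammer (of_nat (Suc n + 1)) m)"
    by (simp only: Suc.IH)
  also have "\<dots> = fps_nth F (n + Suc m) * pochhammer (of_nat (n + 1)) (Suc m)"
    by (simp add: pochhammer_rec algebra_simps)
  finally show ?case .
qed

lemma fps_conv_radius_deriv_funpow:
  fixes F :: "complex fps"
  shows "fps_conv_radius F \<le> fps_conv_radius ((fps_deriv ^^ m) F)"
proof (induction m)
  case 0
  then show ?case by simp
next
  case (Suc m)
  then show ?case using fps_conv_radius_deriv[of "(fps_deriv ^^ m) F"] by simp
qed

lemma higher_deriv_eval_fps:
  fixes F :: "complex fps"
  shows "norm z < fps_conv_radius F \<Longrightarrow> (deriv ^^ m) (eval_fps F) z = eval_fps ((fps_deriv ^^ m) F) z"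
proof (induction m arbitrary: z)
  case 0
  then show ?case by simp
next
  case (Suc m)
  have ev: "eventually (\<lambda>w. w \<in> eball 0 (fps_conv_radius F)) (nhds z)"
    using Suc.prems by (intro eventually_nhds_in_open) auto
  hence "eventually (\<lambda>w. (deriv ^^ m) (eval_fps F) w = eval_fps ((fps_deriv ^^ m) F) w) (nhds z)"
    by eventually_elim (intro Suc.IH, simp)
  hence "(deriv ^^ 1) ((deriv ^^ m) (eval_fps F)) z = (deriv ^^ 1) (eval_fps ((fps_deriv ^^ m) F)) z"
    by (intro higher_deriv_cong_ev refl)
  hence "(deriv ^^ Suc m) (eval_fps F) z = deriv (eval_fps ((fps_deriv ^^ m) F)) z"
    by simp
  also have "\<dots> = eval_fps (fps_deriv ((fps_deriv ^^ m) F)) z"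
    using Suc.prems fps_conv_radius_deriv_funpow[of F m]
    by (intro eval_fps_deriv[symmetric]) (auto intro: less_le_trans)
  finally show ?case by simp
qed

lemma column_sums:
  fixes g :: "nat \<Rightarrow> complex"
  assumes "norm z < fps_conv_radius (Abs_fps g)"
  shows "(\<lambda>n. g n * of_nat (n choose m) * z ^ n) sums
           ((deriv ^^ m) (\<lambda>z. \<Sum>n. g n * z ^ n) z * z ^ m / fact m)"
proof -
  define F where "F = Abs_fps g"
  have G: "(\<lambda>z. \<Sum>n. g n * z ^ n) = eval_fps F"
    by (simp add: F_def eval_fps_def fun_eq_iff)
  have "(\<lambda>n. fps_nth ((fps_deriv ^^ m) F) n * z ^ n) sums eval_fps ((fps_deriv ^^ m) F) z"
    using assms fps_conv_radius_deriv_funpow[of F m] unfolding F_def[symmetric]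
    by (intro sums_eval_fps) (auto intro: less_le_trans)
  hence "(\<lambda>n. fps_nth ((fps_deriv ^^ m) F) n * z ^ n * (z ^ m / fact m)) sums
           (eval_fps ((fps_deriv ^^ m) F) z * (z ^ m / fact m))"
    by (rule sums_mult2)
  moreover have "fps_nth ((fps_deriv ^^ m) F) n * z ^ n * (z ^ m / fact m) =
                 g (n + m) * of_nat ((n + m) choose m) * z ^ (n + m)" for n
  proof -
    have "pochhammer (of_nat (n + 1) :: complex) m / fact m = of_nat ((n + m) choose m)"
      by (simp add: binomial_gbinomial gbinomial_pochhammer' of_nat_add algebra_simps)
    thus ?thesis
      by (simp add: fps_deriv_funpow_nth F_def power_add field_simps)
  qed
  ultimately have "(\<lambda>n. g (n + m) * of_nat ((n + m) choose m) * z ^ (n + m)) sums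
           (eval_fps ((fps_deriv ^^ m) F) z * (z ^ m / fact m))" by simp
  hence "(\<lambda>n. g n * of_nat (n choose m) * z ^ n) sums
           (eval_fps ((fps_deriv ^^ m) F) z * (z ^ m / fact m) + (\<Sum>i<m. g i * of_nat (i choose m) * z ^ i))"
    by (subst (asm) sums_iff_shift[where f = "\<lambda>n. g n * of_nat (n choose m) * z ^ n"])
  moreover have "(\<Sum>i<m. g i * of_nat (i choose m) * z ^ i) = 0"
    by (intro sum.neutral) auto
  moreover have "eval_fps ((fps_deriv ^^ m) F) z = (deriv ^^ m) (eval_fps F) z"
    using assms unfolding F_def by (intro higher_deriv_eval_fps[symmetric]) simp
  ultimately show ?thesis by (simp add: G)
qed

lemma main0:
  fixes g h :: "nat \<Rightarrow> complex"
  assumes K: "K \<ge> 0" and R: "R \<ge> 1"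
    and gb: "\<And>n. norm (g n) \<le> K * R ^ n" and hb: "\<And>n. norm (h n) \<le> K * R ^ n"
  shows "\<exists>r>0. \<forall>z\<in>ball 0 r.
         summable (\<lambda>n. g n * h n * z ^ n) \<and>
         (\<lambda>m. (deriv ^^ m) (\<lambda>z. \<Sum>n. g n * z ^ n) z * fwd_diff m h 0 * z ^ m / fact m)
           sums (\<Sum>n. g n * h n * z ^ n)"
proof -
  define r where "r = 1 / (R * (1 + 2 * R))"
  have r0: "r > 0" using R by (simp add: r_def)
  have Rr: "R * r * (1 + 2 * R) = 1" using R by (simp add: r_def)
  have Rr1: "R * r < 1"
  proof -
    have "R * r * 1 < R * r * (1 + 2 * R)" using R r0 by (intro mult_strict_left_mono) auto
    thus ?thesis using Rr by simp
  qed
  have rad: "ereal r \<le> fps_conv_radius (Abs_fps g)"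
  proof -
    have "summable (\<lambda>n. norm (g n * complex_of_real r ^ n))"
    proof (rule summable_comparison_test')
      show "summable (\<lambda>n. K * (R * r) ^ n)"
        using Rr1 r0 R by (intro summable_mult summable_geometric) auto
      show "norm (norm (g n * complex_of_real r ^ n)) \<le> K * (R * r) ^ n" for n
        using gb[of n] r0 by (simp add: norm_mult norm_power power_mult_distrib mult_right_mono)
    qed
    hence "summable (\<lambda>n. fps_nth (Abs_fps g) n * complex_of_real r ^ n)"
      by (simp add: summable_norm_cancel)
    hence "norm (complex_of_real r) \<le> fps_conv_radius (Abs_fps g)"
      unfolding fps_conv_radius_def by (rule conv_radius_geI)
    thus ?thesis using r0 by simp
  qed
  have "\<forall>z\<in>ball 0 r.
         summable (\<lambda>n. g n * h n * z ^ n) \<and>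
         (\<lambda>m. (deriv ^^ m) (\<lambda>z. \<Sum>n. g n * z ^ n) z * fwd_diff m h 0 * z ^ m / fact m)
           sums (\<Sum>n. g n * h n * z ^ n)"
  proof
    fix z :: complex assume z: "z \<in> ball 0 r"
    hence zr: "norm z < r" by simp
    have "ereal (norm z) < ereal r" using zr by simp
    hence zrad: "ereal (norm z) < fps_conv_radius (Abs_fps g)" using rad by (rule less_le_trans)
    define x where "x = R * norm z"
    define q where "q = x * (1 + 2 * R)"
    have x0: "x \<ge> 0" using R by (simp add: x_def)
    have q0: "q \<ge> 0" using x0 R by (simp add: q_def)
    have q1: "q < 1"
    proof -
      have "q < R * r * (1 + 2 * R)" unfolding q_def x_def
        using zr R by (intro mult_strict_right_mono) auto
      thus ?thesis using Rr by simp
    qed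
    define a where "a n m = g n * of_nat (n choose m) * fwd_diff m h 0 * z ^ n" for n m
    define b where "b n m = K * x ^ n * real (n choose m) * (K * (2 * R) ^ m)" for n m
    have ab: "norm (a n m) \<le> b n m" for n m
    proof -
      have d: "norm (fwd_diff m h 0) \<le> K * (2 * R) ^ m"
        using fwd_diff_bound[OF K R hb, of m 0] by simp
      have "norm (a n m) = norm (g n) * real (n choose m) * norm (fwd_diff m h 0) * norm z ^ n"
        by (simp add: a_def norm_mult norm_power)
      also have "\<dots> \<le> (K * R ^ n) * real (n choose m) * (K * (2 * R) ^ m) * norm z ^ n"
        using gb[of n] d K R by (intro mult_mono) auto
      also have "\<dots> = b n m" by (simp add: b_def x_def power_mult_distrib)
      finally show ?thesis .
    qed
    have b_row: "((\<lambda>m. b n m) has_sum (K * K * q ^ n)) UNIV" for n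
    proof (rule has_sum_finite_neutralI[of "{..n}"])
      show "b n m = 0" if "m \<in> UNIV - {..n}" for m using that by (simp add: b_def)
      have "(1 + 2 * R) ^ n = (\<Sum>m\<le>n. real (n choose m) * (2 * R) ^ m)"
        using binomial_ring[of "2 * R" 1 n] by (simp add: add.commute)
      hence "K * K * q ^ n = K * K * x ^ n * (\<Sum>m\<le>n. real (n choose m) * (2 * R) ^ m)"
        by (simp add: q_def power_mult_distrib)
      also have "\<dots> = (\<Sum>m\<le>n. b n m)"
        by (simp add: sum_distrib_left b_def algebra_simps)
      finally show "K * K * q ^ n = (\<Sum>m\<le>n. b n m)" .
    qed auto
    have b_sum: "(\<lambda>(n, m). b n m) summable_on UNIV \<times> UNIV"
    proof (rule summable_on_SigmaI[where g = "\<lambda>n. K * K * q ^ n"])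
      show "((\<lambda>m. case (n, m) of (n, m) \<Rightarrow> b n m) has_sum K * K * q ^ n) UNIV" for n
        using b_row[of n] by simp
      have "summable (\<lambda>n. K * K * q ^ n)"
        using q0 q1 by (intro summable_mult summable_geometric) auto
      thus "(\<lambda>n. K * K * q ^ n) summable_on UNIV"
        using K q0 by (subst summable_on_UNIV_nonneg_real_iff) auto
      show "0 \<le> (case (n, m) of (n, m) \<Rightarrow> b n m)" for n m
        using K R x0 by (simp add: b_def)
    qed
    have b_abs: "(\<lambda>y. norm ((\<lambda>(n, m). b n m) y)) summable_on UNIV \<times> UNIV"
      using b_sum summable_on_iff_abs_summable_on_real by blast
    have a_sum: "(\<lambda>(n, m). a n m) summable_on UNIV \<times> UNIV"
      by (rule abs_summable_summable, rule Infinite_Sum.abs_summable_on_comparison_test'[OF b_sum])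
         (auto simp: ab)
    define S where "S = infsum (\<lambda>(n, m). a n m) (UNIV \<times> UNIV)"
    have a_has: "((\<lambda>(n, m). a n m) has_sum S) (UNIV \<times> UNIV)"
      using a_sum by (simp add: S_def)
    have rows: "((\<lambda>m. a n m) has_sum (g n * h n * z ^ n)) UNIV" for n
    proof (rule has_sum_finite_neutralI[of "{..n}"])
      show "a n m = 0" if "m \<in> UNIV - {..n}" for m using that by (simp add: a_def)
      have "g n * h n * z ^ n = g n * (\<Sum>m\<le>n. of_nat (n choose m) * fwd_diff m h 0) * z ^ n"
        using newton_forward[of h 0 n] by simp
      also have "\<dots> = (\<Sum>m\<le>n. a n m)"
        by (simp add: a_def sum_distrib_left sum_distrib_right algebra_simps)
      finally show "g n * h n * z ^ n = (\<Sum>m\<le>n. a n m)" .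
    qed auto
    have "((\<lambda>n. g n * h n * z ^ n) has_sum S) UNIV"
      by (rule has_sum_Sigma'[OF a_has]) (use rows in simp)
    hence s1: "(\<lambda>n. g n * h n * z ^ n) sums S" by (rule has_sum_imp_sums)
    have a_has': "((\<lambda>(m, n). a n m) has_sum S) (UNIV \<times> UNIV)"
      using a_has by (subst (asm) has_sum_swap) (simp add: case_prod_unfold)
    have cols: "((\<lambda>n. a n m) has_sum
        ((deriv ^^ m) (\<lambda>z. \<Sum>n. g n * z ^ n) z * fwd_diff m h 0 * z ^ m / fact m)) UNIV" for m
    proof -
      have "(\<lambda>n. a n m) summable_on UNIV"
        using summable_on_SigmaD1[where f = "\<lambda>m n. a n m", of UNIV "\<lambda>_. UNIV" m] a_has'
        unfolding summable_on_def by auto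
      hence h1: "((\<lambda>n. a n m) has_sum infsum (\<lambda>n. a n m) UNIV) UNIV" by simp
      have "(\<lambda>n. g n * of_nat (n choose m) * z ^ n * fwd_diff m h 0) sums
            ((deriv ^^ m) (\<lambda>z. \<Sum>n. g n * z ^ n) z * z ^ m / fact m * fwd_diff m h 0)"
        by (intro sums_mult2 column_sums) (rule zrad)
      hence "(\<lambda>n. a n m) sums
            ((deriv ^^ m) (\<lambda>z. \<Sum>n. g n * z ^ n) z * fwd_diff m h 0 * z ^ m / fact m)"
        by (simp add: a_def algebra_simps)
      moreover have "(\<lambda>n. a n m) sums infsum (\<lambda>n. a n m) UNIV"
        using h1 by (rule has_sum_imp_sums)
      ultimately show ?thesis using h1 sums_unique2 by metis
    qed
    have "((\<lambda>m. (deriv ^^ m) (\<lambda>z. \<Sum>n. g n * z ^ n) z * fwd_diff m h 0 * z ^ m / fact m)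
             has_sum S) UNIV"
      by (rule has_sum_Sigma'[OF a_has']) (use cols in simp)
    hence "(\<lambda>m. (deriv ^^ m) (\<lambda>z. \<Sum>n. g n * z ^ n) z * fwd_diff m h 0 * z ^ m / fact m) sums S"
      by (rule has_sum_imp_sums)
    with s1 show "summable (\<lambda>n. g n * h n * z ^ n) \<and>
         (\<lambda>m. (deriv ^^ m) (\<lambda>z. \<Sum>n. g n * z ^ n) z * fwd_diff m h 0 * z ^ m / fact m)
           sums (\<Sum>n. g n * h n * z ^ n)"
      by (simp add: sums_iff)
  qed
  with r0 show ?thesis by blast
qed

lemma fwd_diff_shift: "fwd_diff m (\<lambda>n. h (Suc n)) j = fwd_diff m h (Suc j)"
  by (induction m arbitrary: j) auto

lemma bounds2:
  fixes g h :: "nat \<Rightarrow> complex"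
  assumes "c \<ge> 0"
    and "(\<lambda>n. norm (g n)) \<in> O(\<lambda>n. exp (c * real n))"
    and "(\<lambda>n. norm (h n)) \<in> O(\<lambda>n. exp (c * real n))"
  shows "\<exists>K. K \<ge> 0 \<and> (\<forall>n. norm (g n) \<le> K * exp c ^ n) \<and> (\<forall>n. norm (h n) \<le> K * exp c ^ n)"
proof -
  obtain K1 where K1: "K1 \<ge> 0" "\<And>n. norm (g n) \<le> K1 * exp c ^ n"
    using bigO_bound[OF assms(1,2)] by blast
  obtain K2 where K2: "K2 \<ge> 0" "\<And>n. norm (h n) \<le> K2 * exp c ^ n"
    using bigO_bound[OF assms(1,3)] by blast
  have "norm (g n) \<le> max K1 K2 * exp c ^ n" for n
    using K1(2)[of n] by (meson dual_order.trans exp_ge_zero max.cobounded1 mult_right_mono zero_le_power)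
  moreover have "norm (h n) \<le> max K1 K2 * exp c ^ n" for n
    using K2(2)[of n] by (meson dual_order.trans exp_ge_zero max.cobounded2 mult_right_mono zero_le_power)
  ultimately show ?thesis using K1(1) by (intro exI[of _ "max K1 K2"]) auto
qed

theorem mainTheorem8:
  fixes g h g0 h0 :: "nat \<Rightarrow> complex" and c c0 :: real
  assumes "c \<ge> 0"
    and "(\<lambda>n. norm (g n)) \<in> O(\<lambda>n. exp (c * real n))"
    and "(\<lambda>n. norm (h n)) \<in> O(\<lambda>n. exp (c * real n))"
    and "c0 \<ge> 0"
    and "(\<lambda>n. norm (g0 n)) \<in> O(\<lambda>n. exp (c0 * real n))"
    and "(\<lambda>n. norm (h0 n)) \<in> O(\<lambda>n. exp (c0 * real n))"
  shows
    "(let G = (\<lambda>z. \<Sum>n. g (Suc n) * z ^ n) in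
       \<exists>r>0. \<forall>z\<in>ball 0 r.
         summable (\<lambda>n. g (Suc n) * h (Suc n) * z ^ n) \<and>
         (\<lambda>m. (deriv ^^ m) G z * fwd_diff m h 1 * z ^ m / fact m)
           sums (\<Sum>n. g (Suc n) * h (Suc n) * z ^ n))
     \<and>
     (let G0 = (\<lambda>z. \<Sum>n. g0 n * z ^ n) in
       \<exists>r>0. \<forall>z\<in>ball 0 r.
         summable (\<lambda>n. g0 n * h0 n * z ^ n) \<and>
         (\<lambda>m. (deriv ^^ m) G0 z * fwd_diff m h0 0 * z ^ m / fact m)
           sums (\<Sum>n. g0 n * h0 n * z ^ n))"
proof -
  obtain K where K: "K \<ge> 0" "\<And>n. norm (g n) \<le> K * exp c ^ n" "\<And>n. norm (h n) \<le> K * exp c ^ n"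
    using bounds2[OF assms(1,2,3)] by blast
  obtain K0 where K0: "K0 \<ge> 0" "\<And>n. norm (g0 n) \<le> K0 * exp c0 ^ n" "\<And>n. norm (h0 n) \<le> K0 * exp c0 ^ n"
    using bounds2[OF assms(4,5,6)] by blast
  have R: "exp c \<ge> 1" "exp c0 \<ge> 1" using assms(1,4) by auto
  have gs: "norm (g (Suc n)) \<le> (K * exp c) * exp c ^ n" for n
    using K(2)[of "Suc n"] by (simp add: algebra_simps)
  have hs: "norm (h (Suc n)) \<le> (K * exp c) * exp c ^ n" for n
    using K(3)[of "Suc n"] by (simp add: algebra_simps)
  have P1: "\<exists>r>0. \<forall>z\<in>ball 0 r.
         summable (\<lambda>n. g (Suc n) * h (Suc n) * z ^ n) \<and>
         (\<lambda>m. (deriv ^^ m) (\<lambda>z. \<Sum>n. g (Suc n) * z ^ n) z * fwd_diff m (\<lambda>n. h (Suc n)) 0 * z ^ m / fact m)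
           sums (\<Sum>n. g (Suc n) * h (Suc n) * z ^ n)"
    using K(1) R(1) by (intro main0[where g = "\<lambda>n. g (Suc n)" and h = "\<lambda>n. h (Suc n)", OF _ _ gs hs]) auto
  have P2: "\<exists>r>0. \<forall>z\<in>ball 0 r.
         summable (\<lambda>n. g0 n * h0 n * z ^ n) \<and>
         (\<lambda>m. (deriv ^^ m) (\<lambda>z. \<Sum>n. g0 n * z ^ n) z * fwd_diff m h0 0 * z ^ m / fact m)
           sums (\<Sum>n. g0 n * h0 n * z ^ n)"
    by (rule main0[OF K0(1) R(2) K0(2) K0(3)])
  show ?thesis using P1 P2 by (simp add: fwd_diff_shift Let_def)
qed

end
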